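(* Let $D$ be a period domain, $F\in D$ a reference point, and $V\subset G_{\mathbb R}$ the (compact) stabilizer of $F$. Then every element of $\Lambda^k\big((\mathfrak g^{-1,1})^\vee\oplus(\mathfrak g^{1,-1})^\vee\big)$ that is invariant under the action induced by $\mathrm{Ad}(V)$ lies in $\bigoplus_{p}\Lambda^p(\mathfrak g^{-1,1})^\vee\otimes\Lambda^p(\mathfrak g^{1,-1})^\vee$, i.e. is of type $(p,p)$. Equivalently: the $G_{\mathbb R}$-invariant forms on $D$ that are orthogonal to the algebraic ideal generated by $I$ and $\bar I$ are all of type $(p,p)$.
   Context: $H$ is a finite-dimensional $\mathbb Q$-vector space with non-degenerate bilinear form $Q$, $Q(u,v)=(-1)^nQ(v,u)$; $D$ is the period domain of polarized Hodge structures $H_{\mathbb C}=\bigoplus_{p+q=n}H^{p,q}$ (with $\overline{H^{p,q}}=H^{q,p}$, $Q(F^p,F^{n-p+1})=0$, $Q(Cu,\bar u)>0$ for $u\neq 0$, $C=i^{p-q}$ on $H^{p,q}$, $F^p=\bigoplus_{p'\ge p}H^{p',n-p'}$) with fixed Hodge numbers; $G_{\mathbb R}=\mathrm{Aut}(H_{\mathbb R},Q)$ acts transitively on $D$, $D=G_{\mathbb R}/V$. At $F$, the complexified Lie algebra decomposes as $\mathfrak g_{\mathbb C}=\bigoplus_r\mathfrak g^{r,-r}$, $\mathfrak g^{r,-r}=\{X: X(H^{p,q})\subset H^{p+r,q-r}\}$, with $\mathfrak v_{\mathbb C}=\mathfrak g^{0,0}$; $\mathrm{Ad}(V)$ preserves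 each $\mathfrak g^{r,-r}$. $T^{1,0}_FD\cong\bigoplus_{r>0}\mathfrak g^{-r,r}$, $T^{0,1}_FD\cong\bigoplus_{r>0}\mathfrak g^{r,-r}$. The infinitesimal period relation $I\subset T^{*1,0}D$ is the annihilator of $\mathfrak g^{-1,1}$, and $\bar I$ its conjugate; forms at $F$ orthogonal (for the Hodge metrics) to the algebraic ideal generated by $I,\bar I$ are identified with $\Lambda^*\big((\mathfrak g^{-1,1})^\vee\oplus(\mathfrak g^{1,-1})^\vee\big)$, and $G_{\mathbb R}$-invariant forms correspond to $\mathrm{Ad}(V)$-invariant elements at $F$. Type $(p,q)$ refers to the summand $\Lambda^p(\mathfrak g^{-1,1})^\vee\otimes\Lambda^q(\mathfrak g^{1,-1})^\vee$. *)

theory Defs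
  imports "HOL-Analysis.Analysis"
begin

text \<open>H = Q^N with N = CARD('m); the form Q is a real matrix with
  rational entries, Q(u,v) = u^T Q v, extended complex-bilinearly to H_C = complex^'m.
  A Hodge structure of weight n is given by its components H^{p,n-p}, indexed by the
  integer p (with H^{p,n-p} = 0 for p outside 0..n).\<close>

definition cmat :: "real^'m^'m \<Rightarrow> complex^'m^'m" where
  "cmat A = (\<chi> i j. complex_of_real (A $ i $ j))"

definition cvec_cnj :: "complex^'m \<Rightarrow> complex^'m" where
  "cvec_cnj v = (\<chi> i. cnj (v $ i))"

definition bform :: "real^'m^'m \<Rightarrow> complex^'m \<Rightarrow> complex^'m \<Rightarrow> complex" where
  "bform Q u v = (\<Sum>i\<in>UNIV. \<Sum>j\<in>UNIV. u $ i * complex_of_real (Q $ i $ j) * v $ j)"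

definition csubspace :: "(complex^'m) set \<Rightarrow> bool" where
  "csubspace S \<longleftrightarrow> 0 \<in> S \<and> (\<forall>u\<in>S. \<forall>v\<in>S. u + v \<in> S) \<and> (\<forall>c. \<forall>u\<in>S. c *s u \<in> S)"

definition hodge_filt :: "nat \<Rightarrow> (int \<Rightarrow> (complex^'m) set) \<Rightarrow> int \<Rightarrow> (complex^'m) set" where
  "hodge_filt n H p = {v. \<exists>u. (\<forall>p'. u p' \<in> H p') \<and> v = (\<Sum>p'\<in>{p..int n}. u p')}"

text \<open>Weil operator C = i^{p-q} on H^{p,q}, q = n - p.\<close>
definition weil_applied :: "nat \<Rightarrow> (int \<Rightarrow> complex^'m) \<Rightarrow> complex^'m" where
  "weil_applied n u = (\<Sum>p\<in>{0..int n}. (\<i> powi (2*p - int n)) *s u p)"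

definition polarized_hodge_structure ::
  "real^'m^'m \<Rightarrow> nat \<Rightarrow> (int \<Rightarrow> (complex^'m) set) \<Rightarrow> bool" where
  "polarized_hodge_structure Q n H \<longleftrightarrow>
     \<comment> \<open>Q is defined over the rationals, non-degenerate and (-1)^n-symmetric\<close>
     (\<forall>i j. Q $ i $ j \<in> \<rat>) \<and> det Q \<noteq> 0 \<and> transpose Q = (-1)^n *\<^sub>R Q \<and>
     \<comment> \<open>Hodge decomposition\<close>
     (\<forall>p. csubspace (H p)) \<and>
     (\<forall>p. (p < 0 \<or> p > int n) \<longrightarrow> H p = {0}) \<and>
     (\<forall>v. \<exists>!u. (\<forall>p. u p \<in> H p) \<and> v = (\<Sum>p\<in>{0..int n}. u p)) \<and>
     (\<forall>p. cvec_cnj ` H p = H (int n - p)) \<and>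
     \<comment> \<open>first Hodge--Riemann bilinear relation\<close>
     (\<forall>p\<in>{0..int n + 1}. \<forall>u\<in>hodge_filt n H p. \<forall>v\<in>hodge_filt n H (int n - p + 1).
         bform Q u v = 0) \<and>
     \<comment> \<open>second Hodge--Riemann bilinear relation: Q(Cu, conj u) > 0 for u \<noteq> 0\<close>
     (\<forall>u. (\<forall>p. u p \<in> H p) \<longrightarrow> (\<Sum>p\<in>{0..int n}. u p) \<noteq> 0 \<longrightarrow>
        (let z = bform Q (weil_applied n u) (cvec_cnj (\<Sum>p\<in>{0..int n}. u p))
         in Im z = 0 \<and> Re z > 0))"

definition lie_gC :: "real^'m^'m \<Rightarrow> (complex^'m^'m) set" where
  "lie_gC Q = {X. transpose X ** cmat Q + cmat Q ** X = 0}"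

definition gpiece :: "real^'m^'m \<Rightarrow> (int \<Rightarrow> (complex^'m) set) \<Rightarrow> int \<Rightarrow> (complex^'m^'m) set" where
  "gpiece Q H r = {X \<in> lie_gC Q. \<forall>p. \<forall>u\<in>H p. X *v u \<in> H (p + r)}"

definition Wsp :: "real^'m^'m \<Rightarrow> (int \<Rightarrow> (complex^'m) set) \<Rightarrow> (complex^'m^'m) set" where
  "Wsp Q H = {A + B | A B. A \<in> gpiece Q H (-1) \<and> B \<in> gpiece Q H 1}"

definition GR :: "real^'m^'m \<Rightarrow> (real^'m^'m) set" where
  "GR Q = {g. transpose g ** Q ** g = Q}"

definition stabV :: "real^'m^'m \<Rightarrow> nat \<Rightarrow> (int \<Rightarrow> (complex^'m) set) \<Rightarrow> (real^'m^'m) set" where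
  "stabV Q n H = {g \<in> GR Q. \<forall>p. (\<lambda>v. cmat g *v v) ` hodge_filt n H p = hodge_filt n H p}"

definition Ad :: "real^'m^'m \<Rightarrow> complex^'m^'m \<Rightarrow> complex^'m^'m" where
  "Ad g X = cmat g ** X ** matrix_inv (cmat g)"

definition mscale :: "complex \<Rightarrow> complex^'m^'m \<Rightarrow> complex^'m^'m" where
  "mscale c X = (\<chi> i j. c * X $ i $ j)"

text \<open>Elements of \<Lambda>^k W^\<or> = alternating complex k-linear forms on W
  (represented by their values on length-k lists of elements of W).\<close>
definition alt_multilinear_on :: "(complex^'m^'m) set \<Rightarrow> nat \<Rightarrow> ((complex^'m^'m) list \<Rightarrow> complex) \<Rightarrow> bool" where
  "alt_multilinear_on W k \<omega> \<longleftrightarrow>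
     (\<forall>xs i c u v. length xs = k \<longrightarrow> set xs \<subseteq> W \<longrightarrow> i < k \<longrightarrow> u \<in> W \<longrightarrow> v \<in> W \<longrightarrow>
         \<omega> (xs[i := mscale c u + v]) =
         c * \<omega> (xs[i := u]) + \<omega> (xs[i := v])) \<and>
     (\<forall>xs i j. length xs = k \<longrightarrow> set xs \<subseteq> W \<longrightarrow> i < k \<longrightarrow> j < k \<longrightarrow> i \<noteq> j \<longrightarrow>
         xs ! i = xs ! j \<longrightarrow> \<omega> xs = 0)"

definition Ad_invariant :: "(real^'m^'m) set \<Rightarrow> (complex^'m^'m) set \<Rightarrow> nat \<Rightarrow> ((complex^'m^'m) list \<Rightarrow> complex) \<Rightarrow> bool" where
  "Ad_invariant V W k \<omega> \<longleftrightarrow>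
     (\<forall>g\<in>V. \<forall>xs. length xs = k \<longrightarrow> set xs \<subseteq> W \<longrightarrow> \<omega> (map (Ad g) xs) = \<omega> xs)"

text \<open>\<omega> lies in the sum over p of \<Lambda>^p (g^{-1,1})^\<or> \<otimes> \<Lambda>^p (g^{1,-1})^\<or>: its
  component of type (p,q) (determined by its values on p arguments from g^{-1,1}
  followed by q arguments from g^{1,-1}) vanishes whenever p \<noteq> q.\<close>
definition sum_of_pp_type :: "real^'m^'m \<Rightarrow> (int \<Rightarrow> (complex^'m) set) \<Rightarrow> nat \<Rightarrow> ((complex^'m^'m) list \<Rightarrow> complex) \<Rightarrow> bool" where
  "sum_of_pp_type Q H k \<omega> \<longleftrightarrow>
     (\<forall>as bs. length as + length bs = k \<longrightarrow> length as \<noteq> length bs \<longrightarrow>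
        set as \<subseteq> gpiece Q H (-1) \<longrightarrow> set bs \<subseteq> gpiece Q H 1 \<longrightarrow> \<omega> (as @ bs) = 0)"

end

theory Submission
  imports Defs
begin



lemma real_mat:
  fixes L :: "complex^'m \<Rightarrow> complex^'m"
  assumes add: "\<And>v w. L (v + w) = L v + L w" and sc: "\<And>c v. L (c *s v) = c *s L v"
    and cn: "\<And>v. L (cvec_cnj v) = cvec_cnj (L v)"
  shows "\<exists>g. \<forall>v. cmat g *v v = L v"
proof -
  have L0: "L 0 = 0" using add[of 0 0] by simp
  have Lsum: "L (\<Sum>j\<in>S. f j) = (\<Sum>j\<in>S. L (f j))" if "finite S" for S and f :: "'m \<Rightarrow> complex^'m"
    using that by (induction S rule: finite_induct) (auto simp: L0 add)
  define g :: "real^'m^'m" where "g = (\<chi> i j. Re (L (axis j 1) $ i))"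
  have ax: "cvec_cnj (axis j 1) = (axis j 1 :: complex^'m)" for j
    by (auto simp: cvec_cnj_def axis_def vec_eq_iff)
  have re: "complex_of_real (Re (L (axis j 1) $ i)) = L (axis j 1) $ i" for i j
  proof -
    have "cnj (L (axis j 1) $ i) = L (axis j 1) $ i"
      using cn[of "axis j 1"] unfolding ax by (metis cvec_cnj_def vec_lambda_beta)
    thus ?thesis by (simp add: complex_eq_iff)
  qed
  have "cmat g *v v = L v" for v
  proof -
    have "L v = L (\<Sum>j\<in>UNIV. v $ j *s axis j 1)" by (simp add: basis_expansion)
    also have "\<dots> = (\<Sum>j\<in>UNIV. v $ j *s L (axis j 1))" by (simp add: Lsum sc)
    finally show ?thesis
      by (simp add: vec_eq_iff matrix_vector_mult_def cmat_def g_def re sum_component mult.commute)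
  qed
  thus ?thesis by blast
qed


lemma bform_zero_left: "bform Q 0 v = 0" unfolding bform_def by simp
lemma bform_zero_right: "bform Q u 0 = 0" unfolding bform_def by simp

lemma bform_add_left: "bform Q (u + w) v = bform Q u v + bform Q w v"
  unfolding bform_def by (simp add: distrib_right sum.distrib)
lemma bform_add_right: "bform Q u (v + w) = bform Q u v + bform Q u w"
  unfolding bform_def by (simp add: distrib_left sum.distrib)

lemma bform_sum_left: "bform Q (\<Sum>p\<in>S. f p) v = (\<Sum>p\<in>S. bform Q (f p) v)"
  by (induction S rule: infinite_finite_induct) (auto simp: bform_zero_left bform_add_left)

lemma bform_sum_right: "bform Q u (\<Sum>p\<in>S. f p) = (\<Sum>p\<in>S. bform Q u (f p))"
  by (induction S rule: infinite_finite_induct) (auto simp: bform_zero_right bform_add_right)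

lemma bform_scale_left: "bform Q (c *s u) v = c * bform Q u v"
  unfolding bform_def by (simp add: sum_distrib_left mult_ac)

lemma bform_scale_right: "bform Q u (c *s v) = c * bform Q u v"
  unfolding bform_def by (simp add: sum_distrib_left mult_ac)

lemma bform_cnj: "bform Q (cvec_cnj u) (cvec_cnj v) = cnj (bform Q u v)"
  unfolding bform_def cvec_cnj_def by simp

lemma cmat_axis: "cmat g *v axis i 1 = (\<chi> a. complex_of_real (g $ a $ i))"
  by (simp add: vec_eq_iff matrix_vector_mult_def cmat_def axis_def if_distrib cong: if_cong)

lemma axis_sum_l: "(\<Sum>a\<in>UNIV. (axis i 1 :: complex^'m) $ a * f a) = f i"
  by (simp add: axis_def if_distrib if_distribR cong: if_cong)
lemma axis_sum_r: "(\<Sum>a\<in>UNIV. f a * (axis i 1 :: complex^'m) $ a) = f i"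
  by (simp add: axis_def if_distrib if_distribR cong: if_cong)
lemma bform_axis: "bform A (axis i 1) (axis j 1) = complex_of_real (A $ i $ j)"
  unfolding bform_def by (simp add: axis_sum_l axis_sum_r)

lemma bform_gram: "bform Q (cmat g *v axis i 1) (cmat g *v axis j 1) =
   complex_of_real ((transpose g ** Q ** g) $ i $ j)"
proof -
  have "(transpose g ** Q ** g) $ i $ j = (\<Sum>b\<in>UNIV. (\<Sum>a\<in>UNIV. g $ a $ i * Q $ a $ b) * g $ b $ j)"
    by (simp add: matrix_matrix_mult_def transpose_def)
  also have "\<dots> = (\<Sum>b\<in>UNIV. \<Sum>a\<in>UNIV. g $ a $ i * Q $ a $ b * g $ b $ j)"
    by (simp add: sum_distrib_right)
  also have "\<dots> = (\<Sum>a\<in>UNIV. \<Sum>b\<in>UNIV. g $ a $ i * Q $ a $ b * g $ b $ j)"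
    by (rule sum.swap)
  finally have e: "(transpose g ** Q ** g) $ i $ j = (\<Sum>a\<in>UNIV. \<Sum>b\<in>UNIV. g $ a $ i * Q $ a $ b * g $ b $ j)" .
  show ?thesis unfolding cmat_axis bform_def e by simp
qed

lemma GR_of: assumes "\<And>u v. bform Q (cmat g *v u) (cmat g *v v) = bform Q u v"
  shows "g \<in> GR Q"
proof -
  have "(transpose g ** Q ** g) $ i $ j = Q $ i $ j" for i j
    using assms[of "axis i 1" "axis j 1"] unfolding bform_gram bform_axis by simp
  thus ?thesis unfolding GR_def by (simp add: vec_eq_iff)
qed




lemma scale_sum: "(c::complex) *s (\<Sum>i\<in>S. f i) = (\<Sum>i\<in>S. c *s f i)"
  by (simp add: vec_eq_iff sum_component sum_distrib_left)

locale phs =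
  fixes Q :: "real^'m^'m" and n :: nat and H :: "int \<Rightarrow> (complex^'m) set"
  assumes P: "polarized_hodge_structure Q n H"
begin

lemma PP1: "\<forall>p. csubspace (H p)"
  using P unfolding polarized_hodge_structure_def by (elim conjE) assumption
lemma PP2: "\<forall>p. (p < 0 \<or> p > int n) \<longrightarrow> H p = {0}"
  using P unfolding polarized_hodge_structure_def by (elim conjE) assumption
lemma PP3: "\<forall>v. \<exists>!u. (\<forall>p. u p \<in> H p) \<and> v = (\<Sum>p\<in>{0..int n}. u p)"
  using P unfolding polarized_hodge_structure_def by (elim conjE) assumption
lemma PP4: "\<forall>p. cvec_cnj ` H p = H (int n - p)"
  using P unfolding polarized_hodge_structure_def by (elim conjE) assumption
lemma PP5: "\<forall>p\<in>{0..int n + 1}. \<forall>u\<in>hodge_filt n H p. \<forall>v\<in>hodge_filt n H (int n - p + 1). bform Q u v = 0"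
  using P unfolding polarized_hodge_structure_def by (elim conjE) assumption
lemma PP6: "transpose Q = (-1)^n *\<^sub>R Q"
  using P unfolding polarized_hodge_structure_def by (elim conjE) assumption

lemma csub: "csubspace (H p)" using PP1 by simp
lemma H0: "0 \<in> H p" using csub[of p] unfolding csubspace_def by simp
lemma Hadd: "u \<in> H p \<Longrightarrow> v \<in> H p \<Longrightarrow> u + v \<in> H p" using csub[of p] unfolding csubspace_def by simp
lemma Hsc: "u \<in> H p \<Longrightarrow> c *s u \<in> H p" using csub[of p] unfolding csubspace_def by simp
lemma Hout: "p < 0 \<or> p > int n \<Longrightarrow> H p = {0}" using PP2 by auto
lemma Hdec: "\<exists>!u. (\<forall>p. u p \<in> H p) \<and> v = (\<Sum>p\<in>{0..int n}. u p)"
  using PP3 by simp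
lemma Hcnj: "cvec_cnj ` H p = H (int n - p)" using PP4 by simp
lemma HR1: "p\<in>{0..int n + 1} \<Longrightarrow> u\<in>hodge_filt n H p \<Longrightarrow> v\<in>hodge_filt n H (int n - p + 1) \<Longrightarrow>
         bform Q u v = 0" using PP5 by simp
lemma Qsym: "transpose Q = (-1)^n *\<^sub>R Q" using PP6 by simp

definition dec :: "complex^'m \<Rightarrow> int \<Rightarrow> complex^'m" where
  "dec v = (THE u. (\<forall>p. u p \<in> H p) \<and> v = (\<Sum>p\<in>{0..int n}. u p))"

lemma dec_prop: "dec v p \<in> H p" "v = (\<Sum>p\<in>{0..int n}. dec v p)"
  using theI'[OF Hdec[of v]] unfolding dec_def by auto

lemma dec_unique: "(\<And>p. u p \<in> H p) \<Longrightarrow> v = (\<Sum>p\<in>{0..int n}. u p) \<Longrightarrow> dec v = u"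
  unfolding dec_def by (rule the1_equality[OF Hdec]) auto

definition ev :: "real \<Rightarrow> int \<Rightarrow> complex" where
  "ev t p = cis (real_of_int (2*p - int n) * t)"

definition T :: "real \<Rightarrow> complex^'m \<Rightarrow> complex^'m" where
  "T t v = (\<Sum>p\<in>{0..int n}. ev t p *s dec v p)"

lemma T_add: "T t (v + w) = T t v + T t w"
proof -
  have "dec (v + w) = (\<lambda>p. dec v p + dec w p)"
    by (rule dec_unique) (auto intro: Hadd dec_prop simp: sum.distrib dec_prop(2)[symmetric])
  thus ?thesis unfolding T_def by (simp add: sum.distrib vector_add_ldistrib)
qed

lemma T_scale: "T t (c *s v) = c *s T t v"
proof -
  have "dec (c *s v) = (\<lambda>p. c *s dec v p)"
    by (rule dec_unique) (auto intro: Hsc dec_prop simp: scale_sum[symmetric] dec_prop(2)[symmetric])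
  thus ?thesis unfolding T_def by (simp add: scale_sum vector_smult_assoc mult.commute)
qed

lemma T_H: assumes "y \<in> H q" shows "T t y = ev t q *s y"
proof (cases "q \<in> {0..int n}")
  case True
  have "dec y = (\<lambda>p. if p = q then y else 0)"
    by (rule dec_unique) (use True assms H0 in auto)
  thus ?thesis unfolding T_def using True by (simp add: if_distrib cong: if_cong)
next
  case False
  hence "y = 0" using Hout[of q] assms by auto
  moreover have "dec 0 = (\<lambda>p. 0)" by (rule dec_unique) (auto simp: H0)
  ultimately show ?thesis unfolding T_def by simp
qed


lemma T_zero: "T t 0 = 0"
proof -
  have "T t 0 = T t (0 *s 0)" by simp
  also have "\<dots> = 0 *s T t 0" by (rule T_scale)
  finally show ?thesis by simp
qed

lemma T_sum: "finite S \<Longrightarrow> T t (\<Sum>i\<in>S. f i) = (\<Sum>i\<in>S. T t (f i))"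
  by (induction S rule: finite_induct) (auto simp: T_zero T_add)

lemma ev_mult: "ev s p * ev t p = ev (s + t) p"
  unfolding ev_def by (simp add: cis_mult distrib_left)

lemma ev_0: "ev 0 p = 1" unfolding ev_def by simp

lemma ev_cnj: "ev t (int n - p) = cnj (ev t p)"
  unfolding ev_def by (simp add: cis_cnj algebra_simps)

lemma ev_shift: "ev t (p + r) = cis (real_of_int (2*r) * t) * ev t p"
  unfolding ev_def by (simp add: cis_mult algebra_simps)

lemma T_comp: "T s (T t v) = T (s + t) v"
proof -
  have "T s (T t v) = (\<Sum>p\<in>{0..int n}. T s (ev t p *s dec v p))"
    unfolding T_def[of t] by (simp add: T_sum)
  also have "\<dots> = (\<Sum>p\<in>{0..int n}. ev (s+t) p *s dec v p)"
    by (rule sum.cong) (auto simp: T_scale T_H[OF dec_prop(1)] vector_smult_assoc ev_mult add.commute[of t s])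
  finally show ?thesis unfolding T_def .
qed

lemma T_id: "T 0 v = v"
  unfolding T_def by (simp add: ev_0 dec_prop(2)[symmetric])

lemma cnj_sum: "finite S \<Longrightarrow> cvec_cnj (\<Sum>i\<in>S. f i) = (\<Sum>i\<in>S. cvec_cnj (f i))"
  by (induction S rule: finite_induct) (auto simp: cvec_cnj_def vec_eq_iff)

lemma cnj_scale: "cvec_cnj (c *s v) = cnj c *s cvec_cnj v"
  by (auto simp: cvec_cnj_def vec_eq_iff)

lemma cnj_H: "y \<in> H p \<Longrightarrow> cvec_cnj y \<in> H (int n - p)"
  using Hcnj[of p] by blast

lemma T_cnj: "T t (cvec_cnj v) = cvec_cnj (T t v)"
proof -
  have "T t (cvec_cnj v) = (\<Sum>p\<in>{0..int n}. T t (cvec_cnj (dec v p)))"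
    by (subst dec_prop(2)[of v]) (simp add: cnj_sum T_sum)
  also have "\<dots> = (\<Sum>p\<in>{0..int n}. cvec_cnj (ev t p *s dec v p))"
    by (rule sum.cong) (auto simp: T_H[OF cnj_H[OF dec_prop(1)]] ev_cnj cnj_scale)
  finally show ?thesis unfolding T_def by (simp add: cnj_sum)
qed

end


lemma mv_sum: "(X::complex^'m^'m) *v (\<Sum>i\<in>S. f i) = (\<Sum>i\<in>S. X *v f i)"
  by (induction S rule: infinite_finite_induct) (auto simp: matrix_vector_right_distrib)

lemma mscale_mv: "mscale c X *v v = c *s (X *v v)"
  by (simp add: vec_eq_iff matrix_vector_mult_def mscale_def sum_distrib_left mult_ac)

context phs begin

lemma filt_mem: assumes "x \<in> H q" "p \<le> q" "q \<le> int n" shows "x \<in> hodge_filt n H p"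
  unfolding hodge_filt_def
proof (intro CollectI exI conjI allI)
  show "(if p' = q then x else 0) \<in> H p'" for p' using assms H0 by auto
  show "x = (\<Sum>p'\<in>{p..int n}. if p' = q then x else 0)" using assms by simp
qed

lemma orth_gt: assumes "x \<in> H p" "y \<in> H q" "p + q > int n" shows "bform Q x y = 0"
proof (cases "p < 0 \<or> p > int n")
  case True then have "x = 0" using Hout assms by auto
  thus ?thesis by (simp add: bform_zero_left)
next
  case pF: False
  show ?thesis
  proof (cases "q < 0 \<or> q > int n")
    case True then have "y = 0" using Hout assms by auto
    thus ?thesis by (simp add: bform_zero_right)
  next
    case False
    show ?thesis
      by (rule HR1[of p]) (use pF False assms in \<open>auto intro!: filt_mem\<close>)
  qed
qed

lemma orth: assumes "x \<in> H p" "y \<in> H q" "p + q \<noteq> int n" shows "bform Q x y = 0"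
proof (cases "p + q > int n")
  case True thus ?thesis using orth_gt assms by blast
next
  case False
  have "bform Q (cvec_cnj x) (cvec_cnj y) = 0"
    by (rule orth_gt[OF cnj_H[OF assms(1)] cnj_H[OF assms(2)]]) (use False assms in auto)
  thus ?thesis by (simp add: bform_cnj)
qed

lemma ev_unit: "ev t p * cnj (ev t p) = 1"
  unfolding ev_def by (simp add: cis_cnj cis_mult)

lemma ev_unit': "cnj (ev t p) * ev t p = 1"
  using ev_unit[of t p] by (simp add: mult.commute)

lemma T_bform: "bform Q (T t u) (T t v) = bform Q u v"
proof -
  have "bform Q (T t u) (T t v) = (\<Sum>p\<in>{0..int n}. \<Sum>q\<in>{0..int n}.
          bform Q (ev t p *s dec u p) (ev t q *s dec v q))"
    unfolding T_def bform_sum_left bform_sum_right by (rule sum.swap)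
  also have "\<dots> = (\<Sum>p\<in>{0..int n}. \<Sum>q\<in>{0..int n}. bform Q (dec u p) (dec v q))"
  proof (intro sum.cong refl)
    fix p q
    show "bform Q (ev t p *s dec u p) (ev t q *s dec v q) = bform Q (dec u p) (dec v q)"
    proof (cases "p + q = int n")
      case True
      hence "q = int n - p" by simp
      hence "ev t q = cnj (ev t p)" using ev_cnj[of t p] by simp
      thus ?thesis by (simp add: bform_scale_left bform_scale_right ev_unit ev_unit' mult.assoc[symmetric])
    next
      case False
      thus ?thesis using orth[OF dec_prop(1) dec_prop(1)]
        by (simp add: bform_scale_left bform_scale_right)
    qed
  qed
  also have "\<dots> = bform Q (\<Sum>p\<in>{0..int n}. dec u p) (\<Sum>q\<in>{0..int n}. dec v q)"
    unfolding bform_sum_left bform_sum_right by (rule sum.swap)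
  also have "\<dots> = bform Q u v" by (simp only: dec_prop(2)[symmetric])
  finally show ?thesis .
qed

definition gT :: "real \<Rightarrow> real^'m^'m" where
  "gT t = (SOME g. \<forall>v. cmat g *v v = T t v)"

lemma gT: "cmat (gT t) *v v = T t v"
proof -
  have "\<exists>g. \<forall>v. cmat g *v v = T t v"
    by (rule real_mat) (auto simp: T_add T_scale T_cnj)
  hence "\<forall>v. cmat (gT t) *v v = T t v" unfolding gT_def by (rule someI_ex)
  thus ?thesis by blast
qed

lemma gT_GR: "gT t \<in> GR Q"
  by (rule GR_of) (simp add: gT T_bform)

lemma T_filt: assumes "v \<in> hodge_filt n H p" shows "T t v \<in> hodge_filt n H p"
proof -
  obtain u where u: "\<And>p'. u p' \<in> H p'" "v = (\<Sum>p'\<in>{p..int n}. u p')"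
    using assms unfolding hodge_filt_def by blast
  have "T t v = (\<Sum>p'\<in>{p..int n}. ev t p' *s u p')"
    unfolding u(2) by (simp add: T_sum T_H[OF u(1)])
  thus ?thesis unfolding hodge_filt_def
    by (intro CollectI exI[of _ "\<lambda>p'. ev t p' *s u p'"] conjI allI Hsc u(1))
qed

lemma gT_stab: "gT t \<in> stabV Q n H"
  unfolding stabV_def
proof (intro CollectI conjI allI gT_GR)
  fix p
  show "(\<lambda>v. cmat (gT t) *v v) ` hodge_filt n H p = hodge_filt n H p"
  proof
    show "(\<lambda>v. cmat (gT t) *v v) ` hodge_filt n H p \<subseteq> hodge_filt n H p"
    proof
      fix x assume "x \<in> (\<lambda>v. cmat (gT t) *v v) ` hodge_filt n H p"
      then obtain v where "v \<in> hodge_filt n H p" "x = cmat (gT t) *v v" by blast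
      thus "x \<in> hodge_filt n H p" using T_filt[of v p t] by (simp add: gT)
    qed
    show "hodge_filt n H p \<subseteq> (\<lambda>v. cmat (gT t) *v v) ` hodge_filt n H p"
    proof
      fix v assume v: "v \<in> hodge_filt n H p"
      have "v = T t (T (-t) v)" by (simp add: T_comp T_id)
      hence "v = cmat (gT t) *v (T (-t) v)" by (simp add: gT)
      thus "v \<in> (\<lambda>v. cmat (gT t) *v v) ` hodge_filt n H p"
        using T_filt[OF v, of "-t"] by (rule image_eqI)
    qed
  qed
qed

lemma gT_inv: "cmat (gT t) ** cmat (gT (-t)) = mat 1"
  apply (subst matrix_eq)
  apply (simp add: matrix_vector_mul_assoc[symmetric] gT T_comp T_id)
  done

lemma Ad_gT: assumes X: "X \<in> gpiece Q H r"
  shows "Ad (gT t) X = mscale (cis (real_of_int (2*r) * t)) X"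
proof -
  let ?P = "cmat (gT t)" and ?P' = "cmat (gT (-t))"
  have l: "?P' ** ?P = mat 1" using gT_inv[of "-t"] by simp
  have "\<exists>A'. ?P ** A' = mat 1 \<and> A' ** ?P = mat 1" using gT_inv l by blast
  hence "?P ** matrix_inv ?P = mat 1" unfolding matrix_inv_def by (rule someI_ex[where P="\<lambda>A'. ?P ** A' = mat 1 \<and> A' ** ?P = mat 1", THEN conjunct1])
  hence "?P' ** (?P ** matrix_inv ?P) = ?P'" by simp
  hence inv: "matrix_inv ?P = ?P'" by (simp add: matrix_mul_assoc l)
  let ?c = "cis (real_of_int (2*r) * t)"
  have Xm: "X *v y \<in> H (p + r)" if "y \<in> H p" for y p using X that unfolding gpiece_def by blast
  have "(?P ** X ** ?P') *v v = ?c *s (X *v v)" for v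
  proof -
    define w where "w = T (-t) v"
    have vw: "v = T t w" unfolding w_def by (simp add: T_comp T_id)
    have "(?P ** X ** ?P') *v v = T t (X *v w)"
      by (simp add: matrix_vector_mul_assoc[symmetric] gT w_def)
    also have "\<dots> = T t (\<Sum>p\<in>{0..int n}. X *v dec w p)"
      by (subst dec_prop(2)[of w]) (simp add: mv_sum)
    also have "\<dots> = (\<Sum>p\<in>{0..int n}. ev t (p + r) *s (X *v dec w p))"
      by (simp add: T_sum T_H[OF Xm[OF dec_prop(1)]])
    also have "\<dots> = ?c *s (X *v (\<Sum>p\<in>{0..int n}. ev t p *s dec w p))"
      by (simp add: ev_shift mv_sum scale_sum vector_scalar_commute vector_smult_assoc)
    also have "\<dots> = ?c *s (X *v v)" unfolding vw T_def ..
    finally show ?thesis .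
  qed
  thus ?thesis unfolding Ad_def inv by (simp add: matrix_eq mscale_mv)
qed

end


lemma mscale_transpose: "transpose (mscale c X) = mscale c (transpose X)"
  by (simp add: vec_eq_iff transpose_def mscale_def)
lemma mscale_mult_left: "mscale c X ** Y = mscale c (X ** Y)"
  by (simp add: vec_eq_iff matrix_matrix_mult_def mscale_def sum_distrib_left mult_ac)
lemma mscale_mult_right: "Y ** mscale c X = mscale c (Y ** X)"
  by (simp add: vec_eq_iff matrix_matrix_mult_def mscale_def sum_distrib_left mult_ac)
lemma mscale_add: "mscale c (X + Y) = mscale c X + mscale c Y"
  by (simp add: vec_eq_iff mscale_def distrib_left)
lemma mscale_zero: "mscale c 0 = 0"
  by (simp add: vec_eq_iff mscale_def)

lemma lie_0: "0 \<in> lie_gC Q"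
  unfolding lie_gC_def by (simp add: vec_eq_iff matrix_matrix_mult_def transpose_def)

lemma lie_scale: "X \<in> lie_gC Q \<Longrightarrow> mscale c X \<in> lie_gC Q"
  unfolding lie_gC_def by (simp add: mscale_transpose mscale_mult_left mscale_mult_right
      mscale_add[symmetric] mscale_zero)

lemma prod_if_split: "(\<Prod>i<a+b. if i < a then (x::complex) else y) = x ^ a * y ^ b"
proof (induction b)
  case 0 thus ?case by simp
next
  case (Suc b) thus ?case by (simp add: add.commute[of a] mult_ac)
qed

context phs begin

lemma gpiece_0: "0 \<in> gpiece Q H r"
  unfolding gpiece_def using lie_0 H0 by simp

lemma gpiece_scale: "X \<in> gpiece Q H r \<Longrightarrow> mscale c X \<in> gpiece Q H r"
  unfolding gpiece_def by (auto simp: lie_scale mscale_mv intro: Hsc)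

lemma W_0: "0 \<in> Wsp Q H"
  unfolding Wsp_def using gpiece_0 by force

lemma W_m: "X \<in> gpiece Q H (-1) \<Longrightarrow> X \<in> Wsp Q H"
  unfolding Wsp_def using gpiece_0 by force

lemma W_p: "X \<in> gpiece Q H 1 \<Longrightarrow> X \<in> Wsp Q H"
  unfolding Wsp_def using gpiece_0 by force

lemma W_scale: "X \<in> Wsp Q H \<Longrightarrow> mscale c X \<in> Wsp Q H"
proof -
  assume "X \<in> Wsp Q H"
  then obtain A B where "X = A + B" "A \<in> gpiece Q H (-1)" "B \<in> gpiece Q H 1"
    unfolding Wsp_def by blast
  hence "mscale c X = mscale c A + mscale c B \<and> mscale c A \<in> gpiece Q H (-1) \<and> mscale c B \<in> gpiece Q H 1"
    by (simp add: mscale_add gpiece_scale)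
  thus ?thesis unfolding Wsp_def by blast
qed

end

locale omega =
  fixes W :: "(complex^'m^'m) set" and k :: nat and \<omega> :: "(complex^'m^'m) list \<Rightarrow> complex"
  assumes alt: "alt_multilinear_on W k \<omega>" and W0: "0 \<in> W"
    and Wsc: "\<And>X c. X \<in> W \<Longrightarrow> mscale c X \<in> W"
begin

lemma lin: "length xs = k \<Longrightarrow> set xs \<subseteq> W \<Longrightarrow> i < k \<Longrightarrow> u \<in> W \<Longrightarrow> v \<in> W \<Longrightarrow>
         \<omega> (xs[i := mscale c u + v]) = c * \<omega> (xs[i := u]) + \<omega> (xs[i := v])"
  using alt unfolding alt_multilinear_on_def by blast

lemma om_zero: assumes "length xs = k" "set xs \<subseteq> W" "i < k" shows "\<omega> (xs[i := 0]) = 0"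
proof -
  have "mscale 1 (0::complex^'m^'m) + 0 = 0" by (simp add: mscale_zero)
  thus ?thesis using lin[OF assms W0 W0, of 1] by simp
qed

lemma om_scale1: assumes "length xs = k" "set xs \<subseteq> W" "i < k"
  shows "\<omega> (xs[i := mscale c (xs ! i)]) = c * \<omega> xs"
proof -
  have xi: "xs ! i \<in> W" using assms by auto
  have "\<omega> (xs[i := mscale c (xs ! i) + 0]) = c * \<omega> (xs[i := xs ! i]) + \<omega> (xs[i := 0])"
    by (rule lin[OF assms xi W0])
  thus ?thesis using om_zero[OF assms] by simp
qed

lemma om_scale_all: assumes "length xs = k" "set xs \<subseteq> W"
  shows "\<omega> (map (\<lambda>i. mscale (f i) (xs ! i)) [0..<k]) = (\<Prod>i<k. f i) * \<omega> xs"
proof -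
  define ys where "ys j = map (\<lambda>i. if i < j then mscale (f i) (xs ! i) else xs ! i) [0..<k]" for j
  have len: "length (ys j) = k" for j unfolding ys_def by simp
  have setW: "set (ys j) \<subseteq> W" for j
    using assms unfolding ys_def by (auto intro!: Wsc)
  have "j \<le> k \<Longrightarrow> \<omega> (ys j) = (\<Prod>i<j. f i) * \<omega> xs" for j
  proof (induction j)
    case 0
    have "ys 0 = xs" unfolding ys_def using assms(1) by (simp add: list_eq_iff_nth_eq)
    thus ?case by simp
  next
    case (Suc j)
    hence j: "j < k" by simp
    have nth: "ys j ! j = xs ! j" unfolding ys_def using j by simp
    have "ys (Suc j) = (ys j)[j := mscale (f j) (ys j ! j)]"
      unfolding nth ys_def using j by (auto simp: list_eq_iff_nth_eq nth_list_update)
    hence "\<omega> (ys (Suc j)) = f j * \<omega> (ys j)"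
      using om_scale1[OF len setW j] by simp
    thus ?case using Suc by simp
  qed
  moreover have "ys k = map (\<lambda>i. mscale (f i) (xs ! i)) [0..<k]"
    unfolding ys_def by simp
  ultimately show ?thesis by (metis le_refl)
qed

end

theorem theorem4p10:
  fixes Q :: "real^'m^'m" and n :: nat and H :: "int \<Rightarrow> (complex^'m) set"
    and k :: nat and \<omega> :: "(complex^'m^'m) list \<Rightarrow> complex"
  assumes "polarized_hodge_structure Q n H"
    and "alt_multilinear_on (Wsp Q H) k \<omega>"
    and "Ad_invariant (stabV Q n H) (Wsp Q H) k \<omega>"
  shows "sum_of_pp_type Q H k \<omega>"
proof -
  interpret phs Q n H by (rule phs.intro) (rule assms(1))
  interpret omega "Wsp Q H" k \<omega> by (rule omega.intro) (use assms(2) W_0 W_scale in auto)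
  show ?thesis unfolding sum_of_pp_type_def
  proof (intro allI impI)
    fix as bs
    assume k: "length as + length bs = k" and ne: "length as \<noteq> length bs"
      and sa: "set as \<subseteq> gpiece Q H (-1)" and sb: "set bs \<subseteq> gpiece Q H 1"
    define d where "d = real (length bs) - real (length as)"
    have d0: "d \<noteq> 0" using ne unfolding d_def by simp
    define \<theta> where "\<theta> = pi / (2 * d)"
    define xs where "xs = as @ bs"
    define f where "f i = (if i < length as then cis (-2 * \<theta>) else cis (2 * \<theta>))" for i
    have lx: "length xs = k" using k unfolding xs_def by simp
    have sx: "set xs \<subseteq> Wsp Q H" using sa sb W_m W_p unfolding xs_def by auto
    have inv: "\<omega> (map (Ad (gT \<theta>)) xs) = \<omega> xs"
      using assms(3) gT_stab lx sx unfolding Ad_invariant_def by blast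
    have "map (Ad (gT \<theta>)) xs = map (\<lambda>i. mscale (f i) (xs ! i)) [0..<k]"
    proof (rule nth_equalityI)
      show "length (map (Ad (gT \<theta>)) xs) = length (map (\<lambda>i. mscale (f i) (xs ! i)) [0..<k])"
        using lx by simp
      fix i assume "i < length (map (Ad (gT \<theta>)) xs)"
      hence i: "i < k" using lx by simp
      show "map (Ad (gT \<theta>)) xs ! i = map (\<lambda>i. mscale (f i) (xs ! i)) [0..<k] ! i"
      proof (cases "i < length as")
        case True
        hence "xs ! i \<in> gpiece Q H (-1)" using sa unfolding xs_def by (auto simp: nth_append)
        from Ad_gT[OF this, of \<theta>] show ?thesis using True i lx unfolding f_def by simp
      next
        case False
        hence "xs ! i \<in> gpiece Q H 1" using sb i k unfolding xs_def by (auto simp: nth_append)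
        from Ad_gT[OF this, of \<theta>] show ?thesis using False i lx unfolding f_def by simp
      qed
    qed
    hence "\<omega> xs = (\<Prod>i<k. f i) * \<omega> xs" using inv om_scale_all[OF lx sx, of f] by simp
    moreover have "(\<Prod>i<k. f i) = -1"
    proof -
      have "(\<Prod>i<k. f i) = cis (-2 * \<theta>) ^ length as * cis (2 * \<theta>) ^ length bs"
        unfolding f_def k[symmetric] by (rule prod_if_split)
      also have "\<dots> = cis (real (length as) * (-2 * \<theta>) + real (length bs) * (2 * \<theta>))"
        by (simp only: Complex.DeMoivre Complex.cis_mult)
      also have "\<dots> = cis (d * (2 * \<theta>))"
        by (rule arg_cong[where f=cis]) (simp add: d_def algebra_simps)
      also have "d * (2 * \<theta>) = pi" unfolding \<theta>_def using d0 by simp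
      finally show ?thesis by simp
    qed
    ultimately show "\<omega> (as @ bs) = 0" unfolding xs_def by simp
  qed
qed


end
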